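(* Assume A2, let $x\in\mathcal I$ and suppose the $x$-threshold word $\pi$ exists. Then (1) if $00$ occurs as a factor of $\pi$, then $\pi=L_n(w)$ for some word $w$ and some $n\ge1$; (2) if $11$ occurs as a factor of $\pi$, then $\pi=R_n(w)$ for some word $w$ and some $n\ge1$.
   Context: Words are finite strings over $\{0,1\}$; $w^\omega$ is the infinite repetition of $w$. Let $\mathcal I\subseteq\mathbb R$ be an interval and $\phi_0,\phi_1:\mathcal I\to\mathcal I$. For a word $w$ put $\phi_w:=\phi_{w_{|w|}}\circ\cdots\circ\phi_{w_1}$ (first letter applied first), $\phi_\epsilon=\mathrm{id}$. Assumption A2: for all $x<y$ in $\mathcal I$ and $k\in\{0,1\}$, $\phi_k(x)<\phi_k(y)$ and $\phi_k(y)-\phi_k(x)<y-x$; moreover $\phi_0,\phi_1$ have fixed points $y_0,y_1\in\mathcal I$ with $y_1<y_0$. The $x$-threshold orbit is the sequence $(x_k)_{k\ge1}$ with $x_1=\phi_1(x)$ and $x_{k+1}=\phi_1(x_k)$ if $x_k\ge x$, $x_{k+1}=\phi_0(x_k)$ if $x_k<x$. The $x$-threshold word is the shortest non-empty finite word $\pi$ such that $x_{k+1}=\phi_{(\pi^\omega)_k}(x_k)$ for all $k\ge1$, when such a word exists. For $p\ge1$, $L_p$ and $R_p$ are the word morphisms (substitutions) determined by $L_p(0)=0^{p+1}1$, $L_p(1)=0^p1$, $R_p(0)=01^p$, $R_p(1)=01^{p+1}$, extended to words by concatenation. *)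

theory Defs
  imports "HOL-Analysis.Analysis" "HOL-Library.Sublist"
begin

text \<open>Words over the alphabet {0,1} are represented as bool lists:
  False stands for the letter 0 and True for the letter 1.\<close>

definition letter_map :: "(real \<Rightarrow> real) \<Rightarrow> (real \<Rightarrow> real) \<Rightarrow> bool \<Rightarrow> real \<Rightarrow> real" where
  "letter_map phi0 phi1 k = (if k then phi1 else phi0)"

definition A2 :: "real set \<Rightarrow> (real \<Rightarrow> real) \<Rightarrow> (real \<Rightarrow> real) \<Rightarrow> bool" where
  "A2 I phi0 phi1 \<longleftrightarrow>
     is_interval I \<and>
     (\<forall>z\<in>I. phi0 z \<in> I) \<and> (\<forall>z\<in>I. phi1 z \<in> I) \<and>
     (\<forall>k. \<forall>a\<in>I. \<forall>b\<in>I. a < b \<longrightarrow>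
         letter_map phi0 phi1 k a < letter_map phi0 phi1 k b \<and>
         letter_map phi0 phi1 k b - letter_map phi0 phi1 k a < b - a) \<and>
     (\<exists>y0\<in>I. \<exists>y1\<in>I. phi0 y0 = y0 \<and> phi1 y1 = y1 \<and> y1 < y0)"

text \<open>The x-threshold orbit, shifted to start at index 0:
  thr_orbit phi0 phi1 x j is x_(j+1) in the paper's notation.\<close>
fun thr_orbit :: "(real \<Rightarrow> real) \<Rightarrow> (real \<Rightarrow> real) \<Rightarrow> real \<Rightarrow> nat \<Rightarrow> real" where
  "thr_orbit phi0 phi1 x 0 = phi1 x"
| "thr_orbit phi0 phi1 x (Suc j) =
     (let z = thr_orbit phi0 phi1 x j in if z \<ge> x then phi1 z else phi0 z)"

text \<open>A non-empty word p fits the orbit if x_(k+1) = phi_((p^omega)_k)(x_k) for all k \<ge> 1.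
  With 0-based indexing, (p^omega)_k = p ! ((k-1) mod length p).\<close>
definition fits_orbit :: "(real \<Rightarrow> real) \<Rightarrow> (real \<Rightarrow> real) \<Rightarrow> real \<Rightarrow> bool list \<Rightarrow> bool" where
  "fits_orbit phi0 phi1 x p \<longleftrightarrow> p \<noteq> [] \<and>
     (\<forall>j. thr_orbit phi0 phi1 x (Suc j) =
            letter_map phi0 phi1 (p ! (j mod length p)) (thr_orbit phi0 phi1 x j))"

definition threshold_word :: "(real \<Rightarrow> real) \<Rightarrow> (real \<Rightarrow> real) \<Rightarrow> real \<Rightarrow> bool list \<Rightarrow> bool" where
  "threshold_word phi0 phi1 x p \<longleftrightarrow> fits_orbit phi0 phi1 x p \<and>
     (\<forall>q. fits_orbit phi0 phi1 x q \<longrightarrow> length p \<le> length q)"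

definition Lmor :: "nat \<Rightarrow> bool list \<Rightarrow> bool list" where
  "Lmor p w = concat (map (\<lambda>b. if b then replicate p False @ [True]
                                   else replicate (p+1) False @ [True]) w)"

definition Rmor :: "nat \<Rightarrow> bool list \<Rightarrow> bool list" where
  "Rmor p w = concat (map (\<lambda>b. if b then False # replicate (p+1) True
                                   else False # replicate p True) w)"

end

theory Submission
  imports Defs
begin

lemma upt_split3: "i \<le> j \<Longrightarrow> j < L \<Longrightarrow> [i..<L] = [i..<j] @ j # [Suc j..<L]"
  by (metis le_add_diff_inverse less_imp_le upt_add_eq_append upt_conv_Cons)

lemma map_const_upt: "(\<And>j. j < m \<Longrightarrow> s (i+j) = c) \<Longrightarrow> map s [i..<i+m] = replicate m c"
proof -
  assume h: "\<And>j. j < m \<Longrightarrow> s (i+j) = c"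
  have "map s [i..<i+m] = map (\<lambda>_. c) [i..<i+m]"
  proof (rule map_cong)
    fix j assume "j \<in> set [i..<i+m]"
    then have "j = i + (j - i)" "j - i < m" by auto
    then show "s j = c" using h by metis
  qed simp
  then show ?thesis by (simp add: map_replicate_const)
qed

lemma perk: fixes s :: "nat \<Rightarrow> bool" and L k :: nat assumes per: "\<And>j. s (j + L) = s j" shows "s (j + k*L) = s j"
proof (induction k)
  case (Suc k)
  have "s (j + Suc k * L) = s (j + k*L + L)" by (simp add: algebra_simps)
  then show ?case using per Suc by simp
qed simp

lemma Lmor_Cons: "Lmor n (b # w) = (if b then replicate n False @ [True] else replicate (Suc n) False @ [True]) @ Lmor n w"
  by (simp add: Lmor_def)
lemma Rmor_Cons: "Rmor n (b # w) = (if b then False # replicate (Suc n) True else False # replicate n True) @ Rmor n w"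
  by (simp add: Rmor_def)

lemma combL:
  fixes s :: "nat \<Rightarrow> bool" and L n r0 t :: nat
  assumes per: "\<And>j. s (j + L) = s j" and L: "L > 0" and s0: "\<not> s 0"
    and no11: "\<And>j. s j \<Longrightarrow> \<not> s (Suc j)"
    and hasT: "s t"
    and run0: "\<And>j. j < r0 \<Longrightarrow> \<not> s j"
    and maxrun: "\<And>i m. (\<And>j. j < m \<Longrightarrow> \<not> s (i+j)) \<Longrightarrow> m \<le> r0"
    and runs: "\<And>i m. (i = 0 \<or> s (i-1)) \<Longrightarrow> (\<And>j. j<m \<Longrightarrow> \<not> s (i+j)) \<Longrightarrow> s (i+m) \<Longrightarrow> m = n \<or> m = Suc n"
  shows "\<exists>w. map s [0..<L] = Lmor n w"
proof -
  have main: "\<forall>i. L - i = d \<longrightarrow> i \<le> L \<longrightarrow> (i = 0 \<or> s (i-1)) \<longrightarrow> (\<exists>w. map s [i..<L] = Lmor n w)" for d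
  proof (induction d rule: less_induct)
    case (less d)
    show ?case
    proof (intro allI impI)
      fix i assume d: "L - i = d" and iL: "i \<le> L" and st: "i = 0 \<or> s (i-1)"
      show "\<exists>w. map s [i..<L] = Lmor n w"
      proof (cases "i = L")
        case True then show ?thesis by (intro exI[of _ "[]"]) (simp add: Lmor_def)
      next
        case False
        hence iL': "i < L" using iL by simp
        have si: "\<not> s i" using st s0 no11[of "i-1"] by (cases i) auto
        have ex: "\<exists>m. s (i+m)"
        proof -
          have "s (t + i*L)" using perk[of s L, OF per] hasT by simp
          moreover have "i \<le> t + i*L" using L by (simp add: trans_le_add2)
          ultimately show ?thesis by (metis le_add_diff_inverse)
        qed
        define m where "m = (LEAST m. s (i+m))"
        have sm: "s (i+m)" using ex unfolding m_def by (rule LeastI_ex)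
        have zm: "\<not> s (i+j)" if "j < m" for j using not_less_Least[of j "\<lambda>m. s(i+m)"] that unfolding m_def by blast
        have imL: "i + m < L"
        proof (rule ccontr)
          assume a: "\<not> i + m < L"
          have "\<not> s (i+j)" if "j < L - i + r0" for j
          proof (cases "i + j < L")
            case True then show ?thesis using zm a by simp
          next
            case False
            then have "i + j = (i+j-L) + L" by simp
            moreover have "i+j-L < r0" using that False iL' by simp
            ultimately show ?thesis using per run0 by metis
          qed
          then have "L - i + r0 \<le> r0" by (rule maxrun)
          with iL' show False by simp
        qed
        have mn: "m = n \<or> m = Suc n" using runs[OF st zm sm] by blast
        have lt: "L - Suc (i+m) < d" using imL d by simp
        have "\<exists>w'. map s [Suc (i+m)..<L] = Lmor n w'"
          using less.IH[OF lt, rule_format, of "Suc (i+m)"] imL sm by simp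
        then obtain w' where w': "map s [Suc (i+m)..<L] = Lmor n w'" by blast
        have "map s [i..<L] = replicate m False @ [True] @ map s [Suc (i+m)..<L]"
          using upt_split3[of i "i+m" L] imL sm map_const_upt[of m s i False] zm by simp
        also have "\<dots> = Lmor n ((m = n) # w')" using mn w' by (auto simp: Lmor_Cons)
        finally show ?thesis by blast
      qed
    qed
  qed
  then show ?thesis using main[of "L - 0", rule_format, of 0] by simp
qed

lemma combR:
  fixes s :: "nat \<Rightarrow> bool" and L n :: nat
  assumes per: "\<And>j. s (j + L) = s j" and L: "L > 0" and s0: "\<not> s 0"
    and runs: "\<And>i m. 1 \<le> i \<Longrightarrow> \<not> s (i-1) \<Longrightarrow> (\<And>j. j<m \<Longrightarrow> s (i+j)) \<Longrightarrow> \<not> s (i+m) \<Longrightarrow> m = n \<or> m = Suc n"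
  shows "\<exists>w. map s [0..<L] = Rmor n w"
proof -
  have main: "\<forall>i. L - i = d \<longrightarrow> i \<le> L \<longrightarrow> (i = L \<or> \<not> s i) \<longrightarrow> (\<exists>w. map s [i..<L] = Rmor n w)" for d
  proof (induction d rule: less_induct)
    case (less d)
    show ?case
    proof (intro allI impI)
      fix i assume d: "L - i = d" and iL: "i \<le> L" and st: "i = L \<or> \<not> s i"
      show "\<exists>w. map s [i..<L] = Rmor n w"
      proof (cases "i = L")
        case True then show ?thesis by (intro exI[of _ "[]"]) (simp add: Rmor_def)
      next
        case False
        hence iL': "i < L" using iL by simp
        have si: "\<not> s i" using st False by simp
        have sL: "\<not> s (Suc i + (L - Suc i))" using per[of 0] s0 iL' by simp
        define m where "m = (LEAST m. \<not> s (Suc i+m))"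
        have sm: "\<not> s (Suc i+m)" using sL unfolding m_def by (rule LeastI)
        have mle: "m \<le> L - Suc i" using sL unfolding m_def by (rule Least_le)
        have zm: "s (Suc i+j)" if "j < m" for j using not_less_Least[of j "\<lambda>m. \<not> s(Suc i+m)"] that unfolding m_def by blast
        have mn: "m = n \<or> m = Suc n" using runs[of "Suc i" m] si sm zm by simp
        have lt: "L - (Suc i+m) < d" using mle d iL' by simp
        have le: "Suc i + m \<le> L" using mle iL' by simp
        have "\<exists>w'. map s [Suc i + m..<L] = Rmor n w'"
          using less.IH[OF lt, rule_format, of "Suc i + m"] le sm by simp
        then obtain w' where w': "map s [Suc i + m..<L] = Rmor n w'" by blast
        have "[i..<L] = i # [Suc i..<Suc i + m] @ [Suc i + m..<L]"
          using mle iL' by (metis le_add1 le_add_diff_inverse le_diff_conv2 Suc_leI upt_add_eq_append upt_conv_Cons append_Cons add.commute)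
        then have "map s [i..<L] = False # replicate m True @ map s [Suc i + m..<L]"
          using si map_const_upt[of m s "Suc i" True] zm by simp
        also have "\<dots> = Rmor n ((m = Suc n) # w')" using mn w' by (auto simp: Rmor_Cons)
        finally show ?thesis by blast
      qed
    qed
  qed
  then show ?thesis using main[of "L - 0", rule_format, of 0] s0 by simp
qed

lemma startR: fixes s :: "nat \<Rightarrow> bool" and k :: nat shows "s k \<Longrightarrow> \<not> s 0 \<Longrightarrow> \<exists>i. 1 \<le> i \<and> i \<le> k \<and> \<not> s (i-1) \<and> (\<forall>j. i \<le> j \<and> j \<le> k \<longrightarrow> s j)"
proof (induction k)
  case 0 then show ?case by simp
next
  case (Suc k)
  show ?case
  proof (cases "s k")
    case True
    then obtain i where "1 \<le> i \<and> i \<le> k \<and> \<not> s (i-1) \<and> (\<forall>j. i \<le> j \<and> j \<le> k \<longrightarrow> s j)" using Suc by blast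
    then show ?thesis using Suc.prems by (intro exI[of _ i]) (auto simp: le_Suc_eq)
  next
    case False then show ?thesis using Suc.prems by (intro exI[of _ "Suc k"]) auto
  qed
qed

lemma choose_n:
  fixes R :: "nat \<Rightarrow> nat \<Rightarrow> bool"
  assumes pw: "\<And>i m i' m'. R i m \<Longrightarrow> R i' m' \<Longrightarrow> m' \<le> Suc m" and r0: "R i0 m0" and m0: "m0 \<ge> 2"
  shows "\<exists>n\<ge>1. \<forall>i m. R i m \<longrightarrow> m = n \<or> m = Suc n"
proof (cases "\<exists>i1 m1. R i1 m1 \<and> m1 < m0")
  case True
  then obtain i1 m1 where h: "R i1 m1" "m1 < m0" by blast
  have "m0 \<le> Suc m1" using pw[OF h(1) r0] .
  have "\<forall>i m. R i m \<longrightarrow> m = m1 \<or> m = Suc m1"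
  proof (intro allI impI)
    fix i m assume "R i m"
    then have "m \<le> Suc m1" "m0 \<le> Suc m" using pw[OF h(1)] pw[OF _ r0] by auto
    then show "m = m1 \<or> m = Suc m1" using h(2) \<open>m0 \<le> Suc m1\<close> by linarith
  qed
  moreover have "1 \<le> m1" using h(2) \<open>m0 \<le> Suc m1\<close> m0 by linarith
  ultimately show ?thesis by blast
next
  case False
  have "\<forall>i m. R i m \<longrightarrow> m = m0 \<or> m = Suc m0"
  proof (intro allI impI)
    fix i m assume "R i m"
    then have "m \<le> Suc m0" "m0 \<le> m" using pw[OF r0] False by (auto simp: not_less)
    then show "m = m0 \<or> m = Suc m0" by linarith
  qed
  moreover have "1 \<le> m0" using m0 by simp
  ultimately show ?thesis by blast
qed


lemma A2_D:
  assumes "A2 I phi0 phi1" "u\<in>I" "v\<in>I" "u<v"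
  shows "phi0 u < phi0 v" "phi0 v - phi0 u < v - u" "phi1 u < phi1 v" "phi1 v - phi1 u < v - u"
proof -
  from assms(1) have h: "\<forall>k. \<forall>a\<in>I. \<forall>b\<in>I. a < b \<longrightarrow> letter_map phi0 phi1 k a < letter_map phi0 phi1 k b \<and> letter_map phi0 phi1 k b - letter_map phi0 phi1 k a < b - a"
    unfolding A2_def by blast
  from h[THEN spec[of _ False], rule_format, OF assms(2,3,4)] h[THEN spec[of _ True], rule_format, OF assms(2,3,4)]
  show "phi0 u < phi0 v" "phi0 v - phi0 u < v - u" "phi1 u < phi1 v" "phi1 v - phi1 u < v - u"
    by (auto simp: letter_map_def)
qed

lemma A2_Dle:
  assumes "A2 I phi0 phi1" "u\<in>I" "v\<in>I" "u\<le>v"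
  shows "phi0 u \<le> phi0 v" "phi0 v - phi0 u \<le> v - u" "phi1 u \<le> phi1 v" "phi1 v - phi1 u \<le> v - u"
  using A2_D[OF assms(1-3)] assms(4) by (cases "u = v"; force)+

lemma A2_I: "A2 I phi0 phi1 \<Longrightarrow> z \<in> I \<Longrightarrow> phi0 z \<in> I" "A2 I phi0 phi1 \<Longrightarrow> z \<in> I \<Longrightarrow> phi1 z \<in> I"
  unfolding A2_def by blast+

lemma orb_I: "A2 I phi0 phi1 \<Longrightarrow> x \<in> I \<Longrightarrow> thr_orbit phi0 phi1 x j \<in> I"
  by (induction j) (auto simp: Let_def A2_I)

lemma deg1:
  assumes A: "A2 I phi0 phi1" and xI: "x \<in> I" and h: "x \<le> phi1 x"
  shows "fits_orbit phi0 phi1 x [True]"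
proof -
  have ge: "x \<le> thr_orbit phi0 phi1 x j" for j
  proof (induction j)
    case 0 then show ?case using h by simp
  next
    case (Suc j)
    have "phi1 x \<le> phi1 (thr_orbit phi0 phi1 x j)" using A2_Dle(3)[OF A xI orb_I[OF A xI] Suc] .
    then show ?case using Suc h by (simp add: Let_def)
  qed
  show ?thesis unfolding fits_orbit_def using ge by (simp add: Let_def letter_map_def)
qed

lemma deg0:
  assumes A: "A2 I phi0 phi1" and xI: "x \<in> I" and h: "phi0 x \<le> x" and h1: "phi1 x < x"
  shows "fits_orbit phi0 phi1 x [False]"
proof -
  have lt: "thr_orbit phi0 phi1 x j < x" for j
  proof (induction j)
    case 0 then show ?case using h1 by simp
  next
    case (Suc j)
    have "phi0 (thr_orbit phi0 phi1 x j) < phi0 x" using A2_D(1)[OF A orb_I[OF A xI] xI Suc] .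
    then show ?case using Suc h by (simp add: Let_def)
  qed
  have "\<not> x \<le> thr_orbit phi0 phi1 x j" for j using lt[of j] by simp
  then show ?thesis unfolding fits_orbit_def by (simp add: Let_def letter_map_def)
qed

locale mc =
  fixes I :: "real set" and phi0 phi1 :: "real \<Rightarrow> real" and x :: real
  assumes A: "A2 I phi0 phi1" and xI: "x \<in> I" and ax: "phi1 x < x" and xb: "x < phi0 x"
begin

abbreviation orb where "orb \<equiv> thr_orbit phi0 phi1 x"
definition s where "s j = (x \<le> orb j)"
definition c where "c = phi1 x + phi0 x - x"

lemma oI: "orb j \<in> I" using orb_I[OF A xI] .

lemma orb_Suc: "orb (Suc j) = (if s j then phi1 (orb j) else phi0 (orb j))"
  by (simp add: s_def Let_def)

declare thr_orbit.simps(2)[simp del]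

lemma rng: "phi1 x \<le> orb j \<and> orb j < phi0 x"
proof (induction j)
  case 0 then show ?case using ax xb by simp
next
  case (Suc j)
  show ?case
  proof (cases "s j")
    case True
    then have xz: "x \<le> orb j" by (simp add: s_def)
    have "phi1 x \<le> phi1 (orb j)" "phi1 (orb j) - phi1 x \<le> orb j - x"
      using A2_Dle(3,4)[OF A xI oI xz] by auto
    then show ?thesis using True Suc ax by (simp add: orb_Suc)
  next
    case False
    then have xz: "orb j < x" by (simp add: s_def)
    have "phi0 (orb j) < phi0 x" "phi0 x - phi0 (orb j) < x - orb j"
      using A2_D(1,2)[OF A oI xI xz] by auto
    then show ?thesis using False Suc ax xb by (simp add: orb_Suc)
  qed
qed

lemma gap1: "s j \<Longrightarrow> orb (Suc j) < c"
proof -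
  assume sj: "s j"
  then have xz: "x \<le> orb j" by (simp add: s_def)
  have "phi1 (orb j) - phi1 x \<le> orb j - x" using A2_Dle(4)[OF A xI oI xz] .
  then show ?thesis using sj rng[of j] by (simp add: orb_Suc c_def)
qed

lemma gap0: "\<not> s j \<Longrightarrow> orb (Suc j) > c"
proof -
  assume sj: "\<not> s j"
  then have xz: "orb j < x" by (simp add: s_def)
  have "phi0 x - phi0 (orb j) < x - orb j" using A2_D(2)[OF A oI xI xz] .
  then show ?thesis using sj rng[of j] by (simp add: orb_Suc c_def)
qed

lemma dist: "letter_map phi0 phi1 (s j) (orb j) \<noteq> letter_map phi0 phi1 (\<not> s j) (orb j)"
proof (cases "s j")
  case True
  then have xz: "x \<le> orb j" by (simp add: s_def)
  have "phi0 x \<le> phi0 (orb j)" using A2_Dle(1)[OF A xI oI xz] .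
  then show ?thesis using True gap1[of j] ax by (auto simp: letter_map_def orb_Suc c_def)
next
  case False
  then have xz: "orb j < x" by (simp add: s_def)
  have "phi1 (orb j) < phi1 x" using A2_D(3)[OF A oI xI xz] .
  then show ?thesis using False gap0[of j] xb by (auto simp: letter_map_def orb_Suc c_def)
qed

lemma letter: "orb (Suc j) = letter_map phi0 phi1 (s j) (orb j)"
  by (simp add: orb_Suc letter_map_def)

lemma s0: "\<not> s 0" using ax by (simp add: s_def)

lemma no_both: "s j \<Longrightarrow> s (Suc j) \<Longrightarrow> \<not> s k \<Longrightarrow> \<not> s (Suc k) \<Longrightarrow> False"
  using gap1[of j] gap0[of k] by (auto simp: s_def)

lemma Z1:
  assumes st: "i = 0 \<or> s (i-1)" and zm: "\<And>j. j<m \<Longrightarrow> \<not> s (i+j)" and sm: "s (i+m)"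
    and zm': "\<And>j. j < m' \<Longrightarrow> \<not> s (i'+j)"
  shows "m' \<le> Suc m"
proof (rule ccontr)
  assume "\<not> m' \<le> Suc m"
  then have mm: "Suc (Suc m) \<le> m'" by simp
  have oi: "orb i < c"
  proof (cases i)
    case 0 then show ?thesis using xb by (simp add: c_def)
  next
    case (Suc i0) then show ?thesis using st gap1[of i0] by simp
  qed
  have o1: "orb (Suc i') > c" using gap0[of i'] zm'[of 0] mm by simp
  have "orb (i+j) < orb (Suc i' + j)" if "j \<le> m" for j
    using that
  proof (induction j)
    case 0 then show ?case using oi o1 by simp
  next
    case (Suc j)
    have a1: "\<not> s (i+j)" using zm Suc by simp
    have a2: "\<not> s (Suc i'+j)" using zm'[of "Suc j"] Suc mm by simp
    have "phi0 (orb (i+j)) < phi0 (orb (Suc i'+j))" using A2_D(1)[OF A oI oI] Suc by simp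
    then show ?case using a1 a2 orb_Suc[of "i+j"] orb_Suc[of "Suc i'+j"] by simp
  qed
  from this[of m] sm have "s (Suc i' + m)" by (simp add: s_def)
  moreover have "\<not> s (i' + Suc m)" using zm'[of "Suc m"] mm by simp
  ultimately show False by simp
qed

lemma Z2:
  assumes zm: "\<And>j. j<m \<Longrightarrow> \<not> s (i+j)" and r0: "\<And>j. j<r \<Longrightarrow> \<not> s j" and sr: "s r"
  shows "m \<le> r"
proof (rule ccontr)
  assume "\<not> m \<le> r"
  then have rm: "r < m" by simp
  have "orb j \<le> orb (i+j)" if "j \<le> r" for j
    using that
  proof (induction j)
    case 0 then show ?case using rng[of i] by simp
  next
    case (Suc j)
    have a1: "\<not> s j" "\<not> s (i+j)" using zm r0 Suc rm by auto
    have "phi0 (orb j) \<le> phi0 (orb (i+j))" using A2_Dle(1)[OF A oI oI] Suc by simp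
    then show ?case using a1 orb_Suc[of j] orb_Suc[of "i+j"] by simp
  qed
  from this[of r] sr have "s (i+r)" by (simp add: s_def)
  then show False using zm rm by simp
qed

lemma O1:
  assumes i1: "1 \<le> i" and st: "\<not> s (i-1)" and zm: "\<And>j. j<m \<Longrightarrow> s (i+j)" and sm: "\<not> s (i+m)"
    and zm': "\<And>j. j < m' \<Longrightarrow> s (i'+j)"
  shows "m' \<le> Suc m"
proof (rule ccontr)
  assume "\<not> m' \<le> Suc m"
  then have mm: "Suc (Suc m) \<le> m'" by simp
  have oi: "orb i > c" using i1 st gap0[of "i-1"] by (cases i) auto
  have o1: "orb (Suc i') < c" using gap1[of i'] zm'[of 0] mm by simp
  have "orb (Suc i' + j) < orb (i+j)" if "j \<le> m" for j
    using that
  proof (induction j)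
    case 0 then show ?case using oi o1 by simp
  next
    case (Suc j)
    have a1: "s (i+j)" using zm Suc by simp
    have a2: "s (Suc i'+j)" using zm'[of "Suc j"] Suc mm by simp
    have "phi1 (orb (Suc i'+j)) < phi1 (orb (i+j))" using A2_D(3)[OF A oI oI] Suc by simp
    then show ?case using a1 a2 orb_Suc[of "i+j"] orb_Suc[of "Suc i'+j"] by simp
  qed
  from this[of m] sm have "\<not> s (Suc i' + m)" by (simp add: s_def)
  moreover have "s (i' + Suc m)" using zm'[of "Suc m"] mm by simp
  ultimately show False by simp
qed


lemma sp: "fits_orbit phi0 phi1 x p \<Longrightarrow> s j = p ! (j mod length p)"
proof (rule ccontr)
  assume f: "fits_orbit phi0 phi1 x p" and ne: "s j \<noteq> p ! (j mod length p)"
  then have "p ! (j mod length p) = (\<not> s j)" by auto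
  then have "orb (Suc j) = letter_map phi0 phi1 (\<not> s j) (orb j)" using f unfolding fits_orbit_def by simp
  then show False using letter[of j] dist[of j] by simp
qed

lemma pmap: "fits_orbit phi0 phi1 x p \<Longrightarrow> p = map s [0..<length p]"
  by (rule nth_equalityI) (auto simp: sp)

lemma per: "fits_orbit phi0 phi1 x p \<Longrightarrow> s (j + length p) = s j"
  by (simp add: sp)

lemma short: "fits_orbit phi0 phi1 x q \<Longrightarrow> length q = 1 \<Longrightarrow> threshold_word phi0 phi1 x p \<Longrightarrow> length p \<le> 1"
  unfolding threshold_word_def by force

lemma mainL:
  assumes tw: "threshold_word phi0 phi1 x p" and sub: "sublist [False,False] p"
  shows "\<exists>w n. n \<ge> 1 \<and> p = Lmor n w"
proof -
  have f: "fits_orbit phi0 phi1 x p" using tw unfolding threshold_word_def by blast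
  define L where "L = length p"
  have L2: "2 \<le> L" using sublist_length_le[OF sub] unfolding L_def by simp
  obtain ps ss where pe: "p = ps @ [False,False] @ ss" using sub unfolding sublist_def by blast
  define k where "k = length ps"
  have kL: "Suc k < L" using pe unfolding k_def L_def by simp
  have sk: "\<not> s k" "\<not> s (Suc k)" using sp[OF f, of k] sp[OF f, of "Suc k"] kL pe
    unfolding k_def L_def by (auto simp: nth_append)
  have hasT: "\<exists>t. s t"
  proof (rule ccontr)
    assume "\<not> (\<exists>t. s t)"
    then have "fits_orbit phi0 phi1 x [False]" unfolding fits_orbit_def using letter by simp
    then have "length p \<le> 1" using short tw by simp
    then show False using L2 L_def by simp
  qed
  then obtain t where st: "s t" by blast
  define r0 where "r0 = (LEAST r. s r)"
  have sr0: "s r0" using st unfolding r0_def by (rule LeastI)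
  have run0: "\<not> s j" if "j < r0" for j using not_less_Least[of j s] that unfolding r0_def by blast
  have maxrun: "m \<le> r0" if "\<And>j. j < m \<Longrightarrow> \<not> s (i+j)" for i m using Z2[OF that run0 sr0] by blast
  have "\<not> s (k+j)" if "j < 2" for j using sk that by (cases j) (auto simp: less_2_cases_iff)
  then have r2: "2 \<le> r0" using maxrun[of 2 k] by blast
  have runs: "m = r0 - 1 \<or> m = Suc (r0 - 1)" if "i = 0 \<or> s (i-1)" "\<And>j. j<m \<Longrightarrow> \<not> s (i+j)" "s (i+m)" for i m
  proof -
    have "m \<le> r0" using maxrun that(2) by blast
    moreover have "r0 \<le> Suc m" using Z1[OF that, of r0 0] run0 by simp
    ultimately show ?thesis using r2 by linarith
  qed
  have "\<exists>w. map s [0..<L] = Lmor (r0 - 1) w"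
  proof (rule combL[of s L, OF _ _ s0 _ st run0])
    show "\<And>j. s (j + L) = s j" using per[OF f] L_def by simp
    show "0 < L" using L2 by simp
    show "\<And>j. s j \<Longrightarrow> \<not> s (Suc j)" using no_both sk by blast
    show "\<And>i m. (\<And>j. j < m \<Longrightarrow> \<not> s (i + j)) \<Longrightarrow> m \<le> r0" using maxrun by blast
    show "\<And>i m. i = 0 \<or> s (i - 1) \<Longrightarrow> (\<And>j. j < m \<Longrightarrow> \<not> s (i + j)) \<Longrightarrow> s (i + m) \<Longrightarrow> m = r0 - 1 \<or> m = Suc (r0 - 1)"
      using runs by blast
  qed
  then obtain w where "map s [0..<L] = Lmor (r0 - 1) w" by blast
  then have "p = Lmor (r0 - 1) w" using pmap[OF f] L_def by simp
  moreover have "1 \<le> r0 - 1" using r2 by simp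
  ultimately show ?thesis by blast
qed

lemma mainR:
  assumes tw: "threshold_word phi0 phi1 x p" and sub: "sublist [True,True] p"
  shows "\<exists>w n. n \<ge> 1 \<and> p = Rmor n w"
proof -
  have f: "fits_orbit phi0 phi1 x p" using tw unfolding threshold_word_def by blast
  define L where "L = length p"
  have L2: "2 \<le> L" using sublist_length_le[OF sub] unfolding L_def by simp
  obtain ps ss where pe: "p = ps @ [True,True] @ ss" using sub unfolding sublist_def by blast
  define k where "k = length ps"
  have kL: "Suc k < L" using pe unfolding k_def L_def by simp
  have sk: "s k" "s (Suc k)" using sp[OF f, of k] sp[OF f, of "Suc k"] kL pe
    unfolding k_def L_def by (auto simp: nth_append)
  have perL: "\<And>j. s (j + L) = s j" using per[OF f] L_def by simp
  obtain i where i: "1 \<le> i" "i \<le> k" "\<not> s (i-1)" "\<forall>j. i \<le> j \<and> j \<le> k \<longrightarrow> s j"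
    using startR[of s k, OF sk(1) s0] by blast
  have ex: "\<not> s (i + (i*L - i))"
  proof -
    have "i \<le> i*L" using L2 by simp
    then have "i + (i*L - i) = 0 + i*L" by simp
    then show ?thesis using perk[of s L, OF perL, of 0 i] s0 by simp
  qed
  define m0 where "m0 = (LEAST m. \<not> s (i+m))"
  have sm0: "\<not> s (i+m0)" using ex unfolding m0_def by (rule LeastI)
  have zm0: "s (i+j)" if "j < m0" for j using not_less_Least[of j "\<lambda>m. \<not> s (i+m)"] that unfolding m0_def by blast
  have m02: "2 \<le> m0"
  proof (rule ccontr)
    assume "\<not> 2 \<le> m0"
    then have "i + m0 \<le> Suc k" using i(2) by linarith
    then have "s (i+m0)" using i(4) sk(2) by (cases "i + m0 = Suc k") auto
    then show False using sm0 by simp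
  qed
  define R where "R = (\<lambda>i m. 1 \<le> i \<and> \<not> s (i-1) \<and> (\<forall>j<m. s (i+j)) \<and> \<not> s (i+m))"
  have pw: "m' \<le> Suc m" if "R i m" "R i' m'" for i m i' m'
    using O1[of i m m' i'] that unfolding R_def by blast
  have Ri: "R i m0" unfolding R_def using i sm0 zm0 by blast
  have "\<exists>n\<ge>1. \<forall>i m. R i m \<longrightarrow> m = n \<or> m = Suc n"
    apply (rule choose_n[of R i m0])
    using pw Ri m02 by auto
  then obtain n where n: "n \<ge> 1" "\<forall>i m. R i m \<longrightarrow> m = n \<or> m = Suc n"
    by blast
  have "\<exists>w. map s [0..<L] = Rmor n w"
  proof (rule combR[of s L, OF perL _ s0])
    show "0 < L" using L2 by simp
    show "\<And>i m. 1 \<le> i \<Longrightarrow> \<not> s (i - 1) \<Longrightarrow> (\<And>j. j < m \<Longrightarrow> s (i + j)) \<Longrightarrow> \<not> s (i + m) \<Longrightarrow> m = n \<or> m = Suc n"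
      using n(2) unfolding R_def by blast
  qed
  then show ?thesis using pmap[OF f] n(1) L_def by metis
qed

end

theorem mainTheorem7:
  fixes I :: "real set" and phi0 phi1 :: "real \<Rightarrow> real" and x :: real and p :: "bool list"
  assumes "A2 I phi0 phi1"
    and "x \<in> I"
    and "threshold_word phi0 phi1 x p"
  shows "(sublist [False, False] p \<longrightarrow> (\<exists>w n. n \<ge> 1 \<and> p = Lmor n w))
       \<and> (sublist [True, True] p \<longrightarrow> (\<exists>w n. n \<ge> 1 \<and> p = Rmor n w))"
proof (cases "x \<le> phi1 x \<or> phi0 x \<le> x")
  case True
  have "\<exists>b. fits_orbit phi0 phi1 x [b]"
  proof (cases "x \<le> phi1 x")
    case True then show ?thesis using deg1[OF assms(1,2)] by blast
  next
    case False then show ?thesis using deg0[OF assms(1,2)] \<open>x \<le> phi1 x \<or> phi0 x \<le> x\<close> by force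
  qed
  then have "length p \<le> 1" using assms(3) unfolding threshold_word_def by force
  then show ?thesis using sublist_length_le[of "[False,False]" p] sublist_length_le[of "[True,True]" p] by auto
next
  case False
  then interpret mc I phi0 phi1 x using assms by unfold_locales auto
  show ?thesis using mainL mainR assms(3) by blast
qed

end
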